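(* Let $h>0$ and let $B\subset\mathbb Z^8_h$ be bounded. Then for every function $f:\overline B\to\mathbb O$ and every $y\in\mathbb Z^8_h$, $$\chi_B(y)f(y)=\int_{\partial B}K^h(x,y)*f(x)\,dS(x)+\int_BE^h(y-x)\,(D^hf)(x)\,dV^h(x).$$
   Context: $\mathbb O$ is the real octonion algebra with basis $\mathbf e_0=1,\mathbf e_1,\dots,\mathbf e_7$, where $\mathbf e_i\mathbf e_j=-\delta_{ij}+\sum_k\varepsilon_{ijk}\mathbf e_k$ for $1\le i,j\le 7$, $\varepsilon_{ijk}$ totally antisymmetric with $\varepsilon_{ijk}=1$ for $ijk\in\{123,145,176,246,257,347,365\}$; $\overline{\mathbf e}_0=\mathbf e_0$, $\overline{\mathbf e}_l=-\mathbf e_l$ ($l\ge1$). For $h>0$, $\mathbb Z^8_h=(h\mathbb Z)^8$, $e_0,\dots,e_7$ are the standard unit vectors of $\mathbb R^8$, $\chi_A$ is the indicator of $A$. Difference operators: $\partial_l^{+,h}f(x)=(f(x+he_l)-f(x))/h$, $\partial_l^{-,h}f(x)=(f(x)-f(x-he_l))/h$, $\partial_l^h=\frac12(\partial_l^{+,h}+\partial_l^{-,h})$, $D^hf=\sum_{l=0}^7\mathbf e_l\partial_l^hf$. $N(x)=\{x,x\pm he_0,\dots,x\pm he_7\}$; $\partial B=\{x:\ N(x)\cap B\neq\emptyset,\ N(x)\cap(\mathbb Z^8_h\setminus B)\neq\emptyset\}$, $\overline B=B\cup\partial B$. $\int_Ag\,dV^h=\sum_{x\in A}g(x)h^8$.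 For $x\in\partial B$: $\Sigma(x)=\sum_l[(\partial_l^{+,h}\chi_B(x))^2+(\partial_l^{-,h}\chi_B(x))^2]$, $s(x)=\frac{h^8}{2}\sqrt{\Sigma(x)}$, $n_l^\pm(x)=-2\partial_l^{\pm,h}\chi_B(x)/\sqrt{\Sigma(x)}$, and $\int_{\partial B}g\,dS=\sum_{x\in\partial B}g(x)s(x)$. Fundamental solution: $E^1(x)=\frac{1}{(2\pi)^8}\int_{[-\pi,\pi]^8}\frac{\sum_l\overline{\mathbf e}_l\sin u_l}{\sum_l\sin^2u_l}\sin(\sum_lu_lx_l)\,du$ for $x\in\mathbb Z^8$, and $E^h(x)=h^{-7}E^1(x/h)$ for $x\in\mathbb Z^8_h$. Star product with the boundary kernel: for $x\in\partial B$, $y\in\mathbb Z^8_h$ and $g:\partial B\to\mathbb O$, $$K^h(x,y)*g(x)=-\frac12\sum_{l=0}^7\Big(E^h(he_l-x+y)\,n_l^-(x)+E^h(-he_l-x+y)\,n_l^+(x)\Big)\big(\mathbf e_l\,g(x)\big).$$ *)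

theory Defs
  imports "HOL-Analysis.Analysis"
begin

text \<open>Octonions are represented by their coordinate vectors in real^8 w.r.t. the basis
  e_0 = 1, e_1, ..., e_7 (index type 8, elements 0..7). Points of R^8 are also real^8.\<close>

type_synonym oct = "real ^ 8"

definition eb :: "8 \<Rightarrow> real ^ 8" where
  "eb l = axis l 1"

definition oct_triples :: "(8 \<times> 8 \<times> 8) list" where
  "oct_triples = [(1,2,3),(1,4,5),(1,7,6),(2,4,6),(2,5,7),(3,4,7),(3,6,5)]"

definition oeps :: "8 \<Rightarrow> 8 \<Rightarrow> 8 \<Rightarrow> real" where
  "oeps i j k =
     (if (i,j,k) \<in> set oct_triples \<or> (j,k,i) \<in> set oct_triples \<or> (k,i,j) \<in> set oct_triples then 1
      else if (j,i,k) \<in> set oct_triples \<or> (i,k,j) \<in> set oct_triples \<or> (k,j,i) \<in> set oct_triples then -1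
      else 0)"

definition ebmul :: "8 \<Rightarrow> 8 \<Rightarrow> oct" where
  "ebmul i j =
     (if i = 0 then eb j
      else if j = 0 then eb i
      else (if i = j then - eb 0 else 0) + (\<Sum>k\<in>UNIV. oeps i j k *\<^sub>R eb k))"

definition omul :: "oct \<Rightarrow> oct \<Rightarrow> oct" where
  "omul a b = (\<Sum>i\<in>UNIV. \<Sum>j\<in>UNIV. (a $ i * b $ j) *\<^sub>R ebmul i j)"

definition ocnj :: "oct \<Rightarrow> oct" where
  "ocnj a = (\<chi> l. if l = 0 then a $ l else - (a $ l))"

definition lattice :: "real \<Rightarrow> (real ^ 8) set" where
  "lattice h = {x. \<forall>i. \<exists>k::int. x $ i = h * of_int k}"

definition dplus :: "real \<Rightarrow> 8 \<Rightarrow> (real ^ 8 \<Rightarrow> 'b::real_vector) \<Rightarrow> real ^ 8 \<Rightarrow> 'b" where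
  "dplus h l f x = (1 / h) *\<^sub>R (f (x + h *\<^sub>R eb l) - f x)"

definition dminus :: "real \<Rightarrow> 8 \<Rightarrow> (real ^ 8 \<Rightarrow> 'b::real_vector) \<Rightarrow> real ^ 8 \<Rightarrow> 'b" where
  "dminus h l f x = (1 / h) *\<^sub>R (f x - f (x - h *\<^sub>R eb l))"

definition dcent :: "real \<Rightarrow> 8 \<Rightarrow> (real ^ 8 \<Rightarrow> 'b::real_vector) \<Rightarrow> real ^ 8 \<Rightarrow> 'b" where
  "dcent h l f x = (1 / 2) *\<^sub>R (dplus h l f x + dminus h l f x)"

definition Dh :: "real \<Rightarrow> (real ^ 8 \<Rightarrow> oct) \<Rightarrow> real ^ 8 \<Rightarrow> oct" where
  "Dh h f x = (\<Sum>l\<in>UNIV. omul (eb l) (dcent h l f x))"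

definition nbhd :: "real \<Rightarrow> real ^ 8 \<Rightarrow> (real ^ 8) set" where
  "nbhd h x = insert x ((\<lambda>l. x + h *\<^sub>R eb l) ` UNIV \<union> (\<lambda>l. x - h *\<^sub>R eb l) ` UNIV)"

definition bdry :: "real \<Rightarrow> (real ^ 8) set \<Rightarrow> (real ^ 8) set" where
  "bdry h B = {x \<in> lattice h. nbhd h x \<inter> B \<noteq> {} \<and> nbhd h x \<inter> (lattice h - B) \<noteq> {}}"

definition Sig :: "real \<Rightarrow> (real ^ 8) set \<Rightarrow> real ^ 8 \<Rightarrow> real" where
  "Sig h B x = (\<Sum>l\<in>UNIV. (dplus h l (indicator B) x)\<^sup>2 + (dminus h l (indicator B) x)\<^sup>2)"

definition sdens :: "real \<Rightarrow> (real ^ 8) set \<Rightarrow> real ^ 8 \<Rightarrow> real" where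
  "sdens h B x = h ^ 8 / 2 * sqrt (Sig h B x)"

definition nplus :: "real \<Rightarrow> (real ^ 8) set \<Rightarrow> 8 \<Rightarrow> real ^ 8 \<Rightarrow> real" where
  "nplus h B l x = - 2 * dplus h l (indicator B) x / sqrt (Sig h B x)"

definition nminus :: "real \<Rightarrow> (real ^ 8) set \<Rightarrow> 8 \<Rightarrow> real ^ 8 \<Rightarrow> real" where
  "nminus h B l x = - 2 * dminus h l (indicator B) x / sqrt (Sig h B x)"

text \<open>Fundamental solution E^1 on Z^8 (Henstock-Kurzweil integral over [-pi,pi]^8) and E^h.\<close>
definition E1 :: "real ^ 8 \<Rightarrow> oct" where
  "E1 x = (1 / (2 * pi) ^ 8) *\<^sub>R
     integral (cbox (\<chi> i. - pi) (\<chi> i. pi))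
       (\<lambda>u. (sin (\<Sum>l\<in>UNIV. u $ l * x $ l) / (\<Sum>l\<in>UNIV. (sin (u $ l))\<^sup>2)) *\<^sub>R
              (\<Sum>l\<in>UNIV. sin (u $ l) *\<^sub>R ocnj (eb l)))"

definition Eh :: "real \<Rightarrow> real ^ 8 \<Rightarrow> oct" where
  "Eh h x = (1 / h ^ 7) *\<^sub>R E1 ((1 / h) *\<^sub>R x)"

definition Kstar :: "real \<Rightarrow> (real ^ 8) set \<Rightarrow> real ^ 8 \<Rightarrow> real ^ 8 \<Rightarrow> (real ^ 8 \<Rightarrow> oct) \<Rightarrow> oct" where
  "Kstar h B x y g = - (1 / 2) *\<^sub>R
     (\<Sum>l\<in>UNIV. omul (nminus h B l x *\<^sub>R Eh h (h *\<^sub>R eb l - x + y)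
                      + nplus h B l x *\<^sub>R Eh h (- (h *\<^sub>R eb l) - x + y))
                     (omul (eb l) (g x)))"

definition surf_int :: "real \<Rightarrow> (real ^ 8) set \<Rightarrow> (real ^ 8 \<Rightarrow> oct) \<Rightarrow> oct" where
  "surf_int h B g = (\<Sum>x\<in>bdry h B. sdens h B x *\<^sub>R g x)"

definition vol_int :: "real \<Rightarrow> (real ^ 8) set \<Rightarrow> (real ^ 8 \<Rightarrow> oct) \<Rightarrow> oct" where
  "vol_int h A g = (\<Sum>x\<in>A. h ^ 8 *\<^sub>R g x)"

end

theory Submission
  imports Defs "HOL-Analysis.Analysis"
begin

lemma integral_lborel_prod:
  fixes f :: "'a::euclidean_space \<Rightarrow> real \<Rightarrow> complex"
  assumes int: "\<And>b. b \<in> Basis \<Longrightarrow> integrable lborel (f b)"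
  shows "(\<integral>x. (\<Prod>b\<in>Basis. f b (x \<bullet> b)) \<partial>(lborel::'a measure)) = (\<Prod>b\<in>Basis. integral\<^sup>L lborel (f b))"
proof -
  interpret product_sigma_finite "\<lambda>_. lborel" by standard
  have meas: "(\<lambda>x. (\<Prod>b\<in>Basis. f b (x \<bullet> b))) \<in> borel_measurable (borel::'a measure)"
    using int by (intro borel_measurable_prod) (auto intro!: measurable_compose[OF _ borel_measurable_integrable])
  have "(\<integral>x. (\<Prod>b\<in>Basis. f b (x \<bullet> b)) \<partial>(lborel::'a measure)) =
     (\<integral>x. (\<Prod>b\<in>Basis. f b ((\<Sum>b'\<in>Basis. x b' *\<^sub>R b') \<bullet> b)) \<partial>(\<Pi>\<^sub>M b\<in>Basis. lborel))"
    by (subst lborel_eq, rule integral_distr[OF _ meas]) measurable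
  also have "\<dots> = (\<integral>x. (\<Prod>b\<in>Basis. f b (x b)) \<partial>(\<Pi>\<^sub>M b\<in>Basis. lborel))"
    by (rule Bochner_Integration.integral_cong) (auto intro!: prod.cong simp: inner_sum_left inner_Basis if_distrib sum.delta cong: if_cong)
  also have "\<dots> = (\<Prod>b\<in>Basis. integral\<^sup>L lborel (f b))"
    by (rule product_integral_prod) (auto intro: int)
  finally show ?thesis .
qed

lemma integral_exp_int:
  fixes n :: int
  shows "integral\<^sup>L lborel (\<lambda>t. indicator {-pi..pi} t *\<^sub>R exp (\<i> * of_real (of_int n * t))) = (if n = 0 then 2 * pi else 0)"
proof (cases "n = 0")
  case True
  have "integral\<^sup>L lborel (\<lambda>t. indicator {-pi..pi} t *\<^sub>R (1::complex)) = of_real pi - of_real (-pi)"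
    by (rule integral_FTC_atLeastAtMost[where F="\<lambda>t. of_real t"]) (auto intro!: derivative_eq_intros)
  then show ?thesis using True by simp
next
  case False
  let ?a = "\<i> * of_int n :: complex"
  have a: "?a \<noteq> 0" using False by simp
  have "integral\<^sup>L lborel (\<lambda>t. indicator {-pi..pi} t *\<^sub>R exp (?a * of_real t)) =
     exp (?a * of_real pi) / ?a - exp (?a * of_real (-pi)) / ?a"
    apply (rule integral_FTC_atLeastAtMost[where F="\<lambda>t. exp (?a * of_real t) / ?a"])
    using a
    by (auto intro!: derivative_eq_intros has_complex_derivative_imp_has_vector_derivative [unfolded o_def] continuous_intros)
  also have "exp (?a * of_real pi) = exp (?a * of_real (-pi))"
  proof -
    have "exp (?a * of_real pi) = exp (?a * of_real (-pi) + \<i> * (of_int n * (of_real pi * 2)))"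
      by (simp add: algebra_simps)
    also have "\<dots> = exp (?a * of_real (-pi))"
      by (rule exp_plus_2pin)
    finally show ?thesis .
  qed
  finally show ?thesis using False by (simp add: mult.assoc)
qed

lemma Basis_cart_obtain: "b \<in> (Basis :: (real^'n) set) \<Longrightarrow> \<exists>i. b = axis i 1"
  by (auto simp: Basis_vec_def)

lemma integral_cos_lattice:
  fixes k :: "real^'n"
  assumes kint: "\<forall>i. \<exists>z::int. k$i = of_int z"
  shows "integral (cbox (\<chi> i. -pi) (\<chi> i. pi)) (\<lambda>u. cos (u \<bullet> k)) = (if k = 0 then (2*pi)^CARD('n) else 0)"
proof -
  define C where "C = cbox (\<chi> i::'n. -pi) (\<chi> i. pi)"
  define f where "f b t = indicator {-pi..pi} t *\<^sub>R exp (\<i> * of_real ((k \<bullet> b) * t))" for b :: "real^'n" and t :: real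
  have f_int: "integral\<^sup>L lborel (f b) = (if k \<bullet> b = 0 then 2 * pi else 0)" if bB: "b \<in> Basis" for b
  proof -
    obtain i where b: "b = axis i 1" using Basis_cart_obtain[OF bB] by blast
    obtain z :: int where z: "k $ i = of_int z" using kint by blast
    have "k \<bullet> b = of_int z" using b z by (simp add: inner_axis)
    then show ?thesis unfolding f_def using integral_exp_int[of z] by simp
  qed
  have f_intg: "integrable lborel (f b)" for b
    unfolding f_def by (rule borel_integrable_compact) (auto intro!: continuous_intros)
  have ind: "(\<Prod>b\<in>Basis. indicator {-pi..pi} (u \<bullet> b) :: complex) = indicator C u" for u :: "real^'n"
  proof (cases "u \<in> C")
    case True
    then have "\<forall>i. u $ i \<in> {-pi..pi}"
      unfolding C_def mem_box_cart by auto
    then have "\<forall>b\<in>Basis. u \<bullet> b \<in> {-pi..pi}"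
      by (auto dest!: Basis_cart_obtain simp: inner_axis)
    then show ?thesis using True by (auto intro!: prod.neutral)
  next
    case False
    then obtain i where "u $ i \<notin> {-pi..pi}"
      unfolding C_def mem_box_cart by auto
    then have "axis i (1::real) \<in> (Basis::(real^'n) set)" "u \<bullet> axis i 1 \<notin> {-pi..pi}"
      by (auto simp: inner_axis Basis_real_def)
    then show ?thesis using False by (simp, intro prod_zero bexI[of _ "axis i 1"]) auto
  qed
  have G: "(\<Prod>b\<in>Basis. f b (u \<bullet> b)) = indicator C u *\<^sub>R exp (\<i> * of_real (u \<bullet> k))" for u
  proof -
    have "(\<Prod>b\<in>Basis. f b (u \<bullet> b)) = (\<Prod>b\<in>Basis. indicator {-pi..pi} (u \<bullet> b) :: complex) * (\<Prod>b\<in>Basis. exp (\<i> * of_real ((k \<bullet> b) * (u \<bullet> b))))"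
      unfolding f_def scaleR_conv_of_real by (subst prod.distrib[symmetric]) (auto intro!: prod.cong simp: indicator_def)
    also have "(\<Prod>b\<in>Basis. exp (\<i> * of_real ((k \<bullet> b) * (u \<bullet> b)))) = exp (\<Sum>b\<in>Basis. \<i> * of_real ((k \<bullet> b) * (u \<bullet> b)))"
      by (simp add: exp_sum)
    also have "(\<Sum>b\<in>Basis. \<i> * of_real ((k \<bullet> b) * (u \<bullet> b))) = \<i> * of_real (u \<bullet> k)"
      by (simp add: sum_distrib_left[symmetric] euclidean_inner[of u k] mult.commute)
    finally show ?thesis using ind by (simp add: scaleR_conv_of_real indicator_def)
  qed
  have L: "integral\<^sup>L lborel (\<lambda>u. indicator C u *\<^sub>R exp (\<i> * of_real (u \<bullet> k))) = (\<Prod>b\<in>Basis. integral\<^sup>L lborel (f b))"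
    using integral_lborel_prod[of f, OF f_intg] G by simp
  have intg: "integrable lborel (\<lambda>u. indicator C u *\<^sub>R exp (\<i> * of_real (u \<bullet> k)))"
    unfolding C_def by (rule borel_integrable_compact) (auto intro!: continuous_intros)
  have "set_integrable lborel C (\<lambda>u. cos (u \<bullet> k))"
    unfolding set_integrable_def C_def by (rule borel_integrable_compact) (auto intro!: continuous_intros)
  then have "integral C (\<lambda>u. cos (u \<bullet> k)) = (LINT u:C|lborel. cos (u \<bullet> k))"
    by (simp add: set_borel_integral_eq_integral)
  also have "\<dots> = integral\<^sup>L lborel (\<lambda>u. Re (indicator C u *\<^sub>R exp (\<i> * of_real (u \<bullet> k))))"
    unfolding set_lebesgue_integral_def
    by (rule Bochner_Integration.integral_cong) (auto simp: Re_exp indicator_def)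
  also have "\<dots> = Re (\<Prod>b\<in>Basis. integral\<^sup>L lborel (f b))"
    using integral_bounded_linear[OF bounded_linear_Re intg] L by simp
  also have "\<dots> = (if k = 0 then (2*pi)^CARD('n) else 0)"
  proof (cases "k = 0")
    case True
    then show ?thesis using f_int by (simp add: prod.cong[OF refl f_int])
  next
    case False
    then obtain b where b: "b \<in> Basis" "k \<bullet> b \<noteq> 0" using euclidean_all_zero_iff by blast
    then have P0: "(\<Prod>b\<in>Basis. integral\<^sup>L lborel (f b)) = 0"
      using f_int[OF b(1)] b(2) by (intro prod_zero bexI[OF _ b(1)]) simp_all
    show ?thesis using False by (subst P0) simp
  qed
  finally show ?thesis unfolding C_def .
qed

lemma exhaust_8:
  fixes x :: 8
  shows "x = 0 \<or> x = 1 \<or> x = 2 \<or> x = 3 \<or> x = 4 \<or> x = 5 \<or> x = 6 \<or> x = 7"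
proof (induct x)
  case (of_int z)
  then have "z = 0 \<or> z = 1 \<or> z = 2 \<or> z = 3 \<or> z = 4 \<or> z = 5 \<or> z = 6 \<or> z = 7" by fastforce
  then show ?case by auto
qed
lemma UNIV_8: "(UNIV::8 set) = {0,1,2,3,4,5,6,7}"
  using exhaust_8 by auto
lemma sum_8: "sum f (UNIV::8 set) = f 0 + f 1 + f 2 + f 3 + f 4 + f 5 + f 6 + f 7"
  unfolding UNIV_8 by (simp add: ac_simps)
lemma "(3::8) \<noteq> 5" by simp
lemma eb_comp: "eb l $ k = (if k = l then 1 else 0)" by (simp add: eb_def axis_def)
lemma oeps_tab: "oeps 1 2 3 = 1" "oeps 2 1 3 = -1" by (simp_all add: oeps_def oct_triples_def)

lemma omul_comp: "omul a b $ k = (\<Sum>i\<in>UNIV. \<Sum>j\<in>UNIV. a$i * b$j * (ebmul i j $ k))"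
  by (simp add: omul_def sum_component mult.commute)
lemma omul_explicit:
  "omul a b $ 0 = a$0 * b$0 - a$1 * b$1 - a$2 * b$2 - a$3 * b$3 - a$4 * b$4 - a$5 * b$5 - a$6 * b$6 - a$7 * b$7"
  "omul a b $ 1 = a$0 * b$1 + a$1 * b$0 + a$2 * b$3 - a$3 * b$2 + a$4 * b$5 - a$5 * b$4 - a$6 * b$7 + a$7 * b$6"
  "omul a b $ 2 = a$0 * b$2 - a$1 * b$3 + a$2 * b$0 + a$3 * b$1 + a$4 * b$6 + a$5 * b$7 - a$6 * b$4 - a$7 * b$5"
  "omul a b $ 3 = a$0 * b$3 + a$1 * b$2 - a$2 * b$1 + a$3 * b$0 + a$4 * b$7 - a$5 * b$6 + a$6 * b$5 - a$7 * b$4"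
  "omul a b $ 4 = a$0 * b$4 - a$1 * b$5 - a$2 * b$6 - a$3 * b$7 + a$4 * b$0 + a$5 * b$1 + a$6 * b$2 + a$7 * b$3"
  "omul a b $ 5 = a$0 * b$5 + a$1 * b$4 - a$2 * b$7 + a$3 * b$6 - a$4 * b$1 + a$5 * b$0 - a$6 * b$3 + a$7 * b$2"
  "omul a b $ 6 = a$0 * b$6 + a$1 * b$7 + a$2 * b$4 - a$3 * b$5 - a$4 * b$2 + a$5 * b$3 + a$6 * b$0 - a$7 * b$1"
  "omul a b $ 7 = a$0 * b$7 - a$1 * b$6 + a$2 * b$5 + a$3 * b$4 - a$4 * b$3 - a$5 * b$2 + a$6 * b$1 + a$7 * b$0"
  by (simp_all add: omul_comp sum_8 ebmul_def eb_comp oeps_def oct_triples_def)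

lemma sin_sum_le: fixes f :: "'a \<Rightarrow> real" shows "finite I \<Longrightarrow> \<bar>sin (\<Sum>i\<in>I. f i)\<bar> \<le> (\<Sum>i\<in>I. \<bar>sin (f i)\<bar>)"
proof (induction I rule: finite_induct)
  case (insert a I)
  have "\<bar>sin (f a + sum f I)\<bar> \<le> \<bar>sin (f a)\<bar> + \<bar>sin (sum f I)\<bar>"
  proof -
    have "\<bar>sin (f a + sum f I)\<bar> = \<bar>sin (f a) * cos (sum f I) + cos (f a) * sin (sum f I)\<bar>" by (simp add: sin_add)
    also have "\<dots> \<le> \<bar>sin (f a)\<bar> * \<bar>cos (sum f I)\<bar> + \<bar>cos (f a)\<bar> * \<bar>sin (sum f I)\<bar>" by (simp add: abs_mult[symmetric] abs_triangle_ineq)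
    also have "\<dots> \<le> \<bar>sin (f a)\<bar> * 1 + 1 * \<bar>sin (sum f I)\<bar>"
      by (intro add_mono mult_mono) auto
    finally show ?thesis by simp
  qed
  then show ?case using insert by simp
qed simp

lemma sin_nat_le: "\<bar>sin (real n * t)\<bar> \<le> real n * \<bar>sin t\<bar>"
proof (induction n)
  case (Suc n)
  have "\<bar>sin (real (Suc n) * t)\<bar> = \<bar>sin (real n * t) * cos t + cos (real n * t) * sin t\<bar>"
  proof -
    have "real (Suc n) * t = real n * t + t" by (simp add: algebra_simps)
    then show ?thesis by (simp only: sin_add)
  qed
  also have "\<dots> \<le> \<bar>sin (real n * t)\<bar> * \<bar>cos t\<bar> + \<bar>cos (real n * t)\<bar> * \<bar>sin t\<bar>" by (simp add: abs_mult[symmetric] abs_triangle_ineq)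
  also have "\<dots> \<le> \<bar>sin (real n * t)\<bar> * 1 + 1 * \<bar>sin t\<bar>"
    by (intro add_mono mult_mono) auto
  finally show ?case using Suc by (simp add: distrib_right)
qed simp

lemma sin_int_le: "\<bar>sin (of_int n * t)\<bar> \<le> \<bar>of_int n\<bar> * \<bar>sin (t::real)\<bar>"
proof (cases "n \<ge> 0")
  case True
  define m where "m = nat n"
  have "n = int m" using True by (simp add: m_def)
  then show ?thesis using sin_nat_le[of m t] by simp
next
  case False
  define m where "m = nat (- n)"
  have "n = - int m" using False by (simp add: m_def)
  then show ?thesis using sin_nat_le[of m t] by simp
qed

definition Qf :: "real^8 \<Rightarrow> real" where "Qf u = (\<Sum>l\<in>UNIV. (sin (u$l))\<^sup>2)"
definition Pf :: "real^8 \<Rightarrow> oct" where "Pf u = (\<Sum>l\<in>UNIV. sin (u$l) *\<^sub>R ocnj (eb l))"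
definition Fn :: "real^8 \<Rightarrow> real^8 \<Rightarrow> oct" where
  "Fn x u = (sin (\<Sum>l\<in>UNIV. u $ l * x $ l) / Qf u) *\<^sub>R Pf u"

lemma E1_Fn: "E1 x = (1 / (2 * pi) ^ 8) *\<^sub>R integral (cbox (\<chi> i. - pi) (\<chi> i. pi)) (Fn x)"
  unfolding E1_def Fn_def Qf_def Pf_def ..

lemma ocnj_eb: "ocnj (eb l) = (if l = 0 then eb l else - eb l)"
  by (auto simp: vec_eq_iff ocnj_def eb_def axis_def)

lemma norm_ocnj_eb: "norm (ocnj (eb l)) = 1"
  unfolding ocnj_eb by (simp add: eb_def)

lemma Fn_bound:
  assumes xint: "\<forall>i. \<exists>z::int. x$i = of_int z"
  shows "norm (Fn x u) \<le> 8 * (\<Sum>l\<in>UNIV. \<bar>x$l\<bar>)"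
proof -
  define N where "N = (\<Sum>l\<in>UNIV. \<bar>x$l\<bar>)"
  define A where "A = (\<Sum>l\<in>UNIV. \<bar>sin (u$l)\<bar>)"
  have N0: "N \<ge> 0" unfolding N_def by (simp add: sum_nonneg)
  have A0: "A \<ge> 0" unfolding A_def by (simp add: sum_nonneg)
  have s1: "\<bar>sin (\<Sum>l\<in>UNIV. u $ l * x $ l)\<bar> \<le> N * A"
  proof -
    have "\<bar>sin (\<Sum>l\<in>UNIV. u $ l * x $ l)\<bar> \<le> (\<Sum>l\<in>UNIV. \<bar>sin (u $ l * x $ l)\<bar>)"
      by (rule sin_sum_le) simp
    also have "\<dots> \<le> (\<Sum>l\<in>UNIV. \<bar>x $ l\<bar> * \<bar>sin (u $ l)\<bar>)"
    proof (rule sum_mono)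
      fix l
      obtain z :: int where z: "x$l = of_int z" using xint by blast
      show "\<bar>sin (u $ l * x $ l)\<bar> \<le> \<bar>x $ l\<bar> * \<bar>sin (u $ l)\<bar>"
        using sin_int_le[of z "u$l"] z by (simp add: mult.commute)
    qed
    also have "\<dots> \<le> (\<Sum>l\<in>UNIV. N * \<bar>sin (u $ l)\<bar>)"
    proof (rule sum_mono)
      fix l
      have "\<bar>x $ l\<bar> \<le> N" unfolding N_def by (rule member_le_sum) auto
      then show "\<bar>x $ l\<bar> * \<bar>sin (u $ l)\<bar> \<le> N * \<bar>sin (u $ l)\<bar>" by (simp add: mult_right_mono)
    qed
    also have "\<dots> = N * A" unfolding A_def by (simp add: sum_distrib_left)
    finally show ?thesis .
  qed
  have p1: "norm (Pf u) \<le> A"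
  proof -
    have "norm (Pf u) \<le> (\<Sum>l\<in>UNIV. norm (sin (u$l) *\<^sub>R ocnj (eb l)))" unfolding Pf_def by (rule norm_sum)
    also have "\<dots> = A" unfolding A_def by (simp add: norm_ocnj_eb)
    finally show ?thesis .
  qed
  have AQ: "A\<^sup>2 \<le> Qf u * 8"
  proof -
    have "A\<^sup>2 \<le> (\<Sum>l\<in>UNIV. (\<bar>sin (u$l)\<bar>)\<^sup>2) * card (UNIV::8 set)"
      unfolding A_def by (rule sum_squared_le_sum_of_squares)
    then show ?thesis by (simp add: Qf_def)
  qed
  show ?thesis
  proof (cases "Qf u = 0")
    case True
    then show ?thesis using N0 by (simp add: Fn_def N_def)
  next
    case False
    have Q0: "Qf u > 0" using False unfolding Qf_def by (metis (no_types, lifting) less_eq_real_def sum_nonneg zero_le_power2)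
    have "norm (Fn x u) = \<bar>sin (\<Sum>l\<in>UNIV. u $ l * x $ l)\<bar> * norm (Pf u) / Qf u"
      unfolding Fn_def using Q0 by simp
    also have "\<dots> \<le> (N * A) * A / Qf u"
      using s1 p1 Q0 by (intro divide_right_mono mult_mono) auto
    also have "\<dots> = N * A\<^sup>2 / Qf u" by (simp add: power2_eq_square)
    also have "\<dots> \<le> N * (Qf u * 8) / Qf u"
      using AQ N0 Q0 by (intro divide_right_mono mult_left_mono) auto
    also have "\<dots> = 8 * N" using Q0 by simp
    finally show ?thesis unfolding N_def .
  qed
qed

lemma Fn_borel: "Fn x \<in> borel_measurable borel"
  unfolding Fn_def Qf_def Pf_def by measurable

lemma Fn_integrable:
  assumes xint: "\<forall>i. \<exists>z::int. x$i = of_int z"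
  shows "Fn x integrable_on cbox (\<chi> i. - pi) (\<chi> i. pi)"
proof (rule measurable_bounded_by_integrable_imp_integrable)
  show "Fn x \<in> borel_measurable (lebesgue_on (cbox (\<chi> i. - pi) (\<chi> i. pi)))"
    by (rule measurable_restrict_space1, rule measurable_completion) (simp add: Fn_borel)
  show "(\<lambda>u. 8 * (\<Sum>l\<in>UNIV. \<bar>x$l\<bar>)) integrable_on cbox (\<chi> i. - pi) (\<chi> i. pi)"
    by (rule integrable_const)
  show "norm (Fn x u) \<le> 8 * (\<Sum>l\<in>UNIV. \<bar>x$l\<bar>)" for u by (rule Fn_bound[OF xint])
  show "cbox (\<chi> i. - pi) (\<chi> i. pi) \<in> sets lebesgue" by simp
qed

lemma ocnj_comp: "ocnj a $ k = (if k = 0 then a $ k else - (a $ k))" by (simp add: ocnj_def)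
lemma forall_8: "(\<forall>i::8. P i) \<longleftrightarrow> P 0 \<and> P 1 \<and> P 2 \<and> P 3 \<and> P 4 \<and> P 5 \<and> P 6 \<and> P 7"
  by (metis exhaust_8)

lemma alt_id: "omul (ocnj s) (omul s g) = (\<Sum>l\<in>UNIV. (s$l)^2) *\<^sub>R g"
  unfolding vec_eq_iff forall_8
  by (simp add: omul_explicit ocnj_comp sum_8 power2_eq_square; algebra)+

lemma omul_bilinear: "bilinear omul"
  unfolding bilinear_def
proof (intro conjI allI)
  fix y
  show "linear (\<lambda>x. omul x y)"
    by (rule linearI; simp add: vec_eq_iff forall_8 omul_explicit; algebra)
next
  fix x
  show "linear (\<lambda>y. omul x y)"
    by (rule linearI; simp add: vec_eq_iff forall_8 omul_explicit; algebra)
qed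

interpretation omul: bounded_bilinear omul
  using omul_bilinear bilinear_conv_bounded_bilinear by blast

lemma ocnj_linear: "bounded_linear ocnj"
proof -
  have "linear ocnj" by (rule linearI) (auto simp: vec_eq_iff ocnj_def)
  then show ?thesis by (simp add: linear_conv_bounded_linear)

qed


definition Cb :: "(real^8) set" where "Cb = cbox (\<chi> i. - pi) (\<chi> i. pi)"

lemma sum_sin_eb: "(\<Sum>l\<in>UNIV. sin (u$l) *\<^sub>R eb l) = (\<chi> l. sin (u$l))"
  by (simp add: vec_eq_iff sum_component eb_def axis_def if_distrib cong: if_cong)

lemma ocnj_lin: "linear ocnj" using ocnj_linear bounded_linear.linear by blast

lemma Pf_ocnj: "Pf u = ocnj (\<chi> l. sin (u$l))"
  unfolding Pf_def sum_sin_eb[symmetric] by (simp add: linear_sum[OF ocnj_lin] linear_scale[OF ocnj_lin] o_def)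

lemma sum_shift: "(\<Sum>m\<in>UNIV. u $ m * (k + c *\<^sub>R eb l) $ m) = (\<Sum>m\<in>UNIV. u $ m * k $ m) + c * u $ l"
proof -
  have "u $ m * (k + c *\<^sub>R eb l) $ m = u $ m * k $ m + (if m = l then c * u $ l else 0)" for m
    by (simp add: eb_def axis_def algebra_simps)
  then show ?thesis by (simp add: sum.distrib)
qed

lemma pointwise:
  "(\<Sum>l\<in>UNIV. omul (Fn (k + eb l) u - Fn (k - eb l) u) (omul (eb l) g)) =
     (if Qf u = 0 then 0 else (2 * cos (\<Sum>m\<in>UNIV. u $ m * k $ m)) *\<^sub>R g)"
proof -
  define a where "a = (\<Sum>m\<in>UNIV. u $ m * k $ m)"
  have e1: "(\<Sum>m\<in>UNIV. u $ m * (k + eb l) $ m) = a + u $ l" for l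
    using sum_shift[of u k 1 l] by (simp add: a_def)
  have e2: "(\<Sum>m\<in>UNIV. u $ m * (k - eb l) $ m) = a - u $ l" for l
    using sum_shift[of u k "-1" l] by (simp add: a_def)
  have d: "Fn (k + eb l) u - Fn (k - eb l) u = ((2 * cos a / Qf u) * sin (u $ l)) *\<^sub>R Pf u" for l
    unfolding Fn_def e1 e2 by (simp add: sin_add sin_diff scaleR_diff_left[symmetric] diff_divide_distrib[symmetric]) 
  have "(\<Sum>l\<in>UNIV. omul (Fn (k + eb l) u - Fn (k - eb l) u) (omul (eb l) g)) =
        (\<Sum>l\<in>UNIV. (2 * cos a / Qf u) *\<^sub>R omul (Pf u) (omul (sin (u $ l) *\<^sub>R eb l) g))"
    unfolding d by (simp add: omul.scaleR_left omul.scaleR_right)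
  also have "\<dots> = (2 * cos a / Qf u) *\<^sub>R omul (Pf u) (omul (\<Sum>l\<in>UNIV. sin (u$l) *\<^sub>R eb l) g)"
    by (simp add: scaleR_sum_right[symmetric] omul.sum_left omul.sum_right)
  also have "\<dots> = (2 * cos a / Qf u) *\<^sub>R (Qf u *\<^sub>R g)"
    unfolding sum_sin_eb Pf_ocnj alt_id by (simp add: Qf_def)
  also have "\<dots> = (if Qf u = 0 then 0 else (2 * cos a) *\<^sub>R g)" by simp
  finally show ?thesis unfolding a_def .
qed

lemma int_shift:
  assumes kint: "\<forall>i. \<exists>z::int. k$i = of_int z" and that: "c = 1 \<or> c = -1"
  shows "\<forall>i. \<exists>z::int. (k + c *\<^sub>R eb l)$i = of_int z"
proof
  fix i
  obtain z :: int where z: "k$i = of_int z" using kint by blast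
  show "\<exists>z::int. (k + c *\<^sub>R eb l)$i = of_int z"
    using that z by (intro exI[of _ "z + (if i = l then (if c = 1 then 1 else -1) else 0)"]) (auto simp: eb_def axis_def)
qed

lemma negl_hyp: "negligible {x::real^8. x$0 = c}"
proof -
  have "{x::real^8. x$0 = c} = {x. x \<bullet> axis 0 1 = c}" by (simp add: cart_eq_inner_axis)
  then show ?thesis using negligible_standard_hyperplane[of "axis (0::8) (1::real)" c] by (simp add: Basis_real_def)
qed

lemma Qf_pos:
  assumes "u \<in> Cb" "u$0 \<noteq> -pi" "u$0 \<noteq> 0" "u$0 \<noteq> pi"
  shows "Qf u \<noteq> 0"
proof -
  have "-pi \<le> u$0" "u$0 \<le> pi" using assms(1) unfolding Cb_def mem_box_cart by auto
  then have "sin (u$0) \<noteq> 0" using assms sin_eq_0_pi by force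
  then have "(sin (u$0))\<^sup>2 > 0" by simp
  also have "(sin (u$0))\<^sup>2 \<le> Qf u" unfolding Qf_def by (rule member_le_sum) auto
  finally show ?thesis by simp
qed

lemma key_E1:
  assumes kint: "\<forall>i. \<exists>z::int. k$i = of_int z"
  shows "(\<Sum>l\<in>UNIV. omul (E1 (k + eb l) - E1 (k - eb l)) (omul (eb l) g)) = (if k = 0 then 2 else 0) *\<^sub>R g"
proof -
  define c where "c = 1 / (2 * pi) ^ 8"
  define H where "H l u = Fn (k + eb l) u - Fn (k - eb l) u" for l u
  have ip: "Fn (k + eb l) integrable_on Cb" for l
    using Fn_integrable[OF int_shift[OF kint, of 1 l]] by (simp add: Cb_def)
  have im: "Fn (k - eb l) integrable_on Cb" for l
    using Fn_integrable[OF int_shift[OF kint, of "-1" l]] by (simp add: Cb_def)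
  have iH: "H l integrable_on Cb" for l unfolding H_def by (rule integrable_diff[OF ip im])
  have iHo: "(\<lambda>u. omul (H l u) (omul (eb l) g)) integrable_on Cb" for l
    using integrable_linear[OF iH omul.bounded_linear_left] by (simp add: o_def)
  have E: "E1 (k + eb l) - E1 (k - eb l) = c *\<^sub>R integral Cb (H l)" for l
    unfolding E1_Fn c_def H_def Cb_def[symmetric] integral_diff[OF ip im] by (simp add: scaleR_diff_right)
  have "(\<Sum>l\<in>UNIV. omul (E1 (k + eb l) - E1 (k - eb l)) (omul (eb l) g))
      = (\<Sum>l\<in>UNIV. c *\<^sub>R integral Cb (\<lambda>u. omul (H l u) (omul (eb l) g)))"
  proof (rule sum.cong[OF refl])
    fix l
    have "integral Cb (\<lambda>u. omul (H l u) (omul (eb l) g)) = omul (integral Cb (H l)) (omul (eb l) g)"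
      using integral_linear[OF iH omul.bounded_linear_left] by (simp add: o_def)
    then show "omul (E1 (k + eb l) - E1 (k - eb l)) (omul (eb l) g) = c *\<^sub>R integral Cb (\<lambda>u. omul (H l u) (omul (eb l) g))"
      unfolding E by (simp add: omul.scaleR_left)
  qed
  also have "\<dots> = c *\<^sub>R integral Cb (\<lambda>u. \<Sum>l\<in>UNIV. omul (H l u) (omul (eb l) g))"
    by (simp add: integral_sum[OF _ iHo] scaleR_sum_right)
  also have "integral Cb (\<lambda>u. \<Sum>l\<in>UNIV. omul (H l u) (omul (eb l) g)) = integral Cb (\<lambda>u. cos (u \<bullet> k) *\<^sub>R (2 *\<^sub>R g))"
  proof (rule integral_spike[of "{x::real^8. x$0 = -pi} \<union> {x. x$0 = 0} \<union> {x. x$0 = pi}"])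
    show "negligible ({x::real^8. x$0 = -pi} \<union> {x. x$0 = 0} \<union> {x. x$0 = pi})"
      by (intro negligible_Un negl_hyp)
    fix u assume u: "u \<in> Cb - ({x::real^8. x$0 = -pi} \<union> {x. x$0 = 0} \<union> {x. x$0 = pi})"
    then have "Qf u \<noteq> 0" by (intro Qf_pos) auto
    moreover have "(\<Sum>m\<in>UNIV. u $ m * k $ m) = u \<bullet> k" by (simp add: inner_vec_def)
    ultimately show "cos (u \<bullet> k) *\<^sub>R (2 *\<^sub>R g) = (\<Sum>l\<in>UNIV. omul (H l u) (omul (eb l) g))"
      unfolding H_def pointwise by simp
  qed
  also have "\<dots> = integral Cb (\<lambda>u. cos (u \<bullet> k)) *\<^sub>R (2 *\<^sub>R g)"
  proof -
    have "(\<lambda>u. cos (u \<bullet> k)) integrable_on Cb"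
      unfolding Cb_def by (rule integrable_continuous) (auto intro!: continuous_intros)
    then show ?thesis
      by (intro integral_unique has_integral_scaleR_left integrable_integral)
  qed
  also have "integral Cb (\<lambda>u. cos (u \<bullet> k)) = (if k = 0 then (2*pi)^8 else 0)"
    unfolding Cb_def using integral_cos_lattice[OF kint] by simp
  finally show ?thesis by (simp add: c_def)
qed

lemma lattice_finite:
  assumes h: "h > 0" and B: "B \<subseteq> lattice h" and bd: "bounded B"
  shows "finite B"
proof -
  obtain R where R: "\<forall>x\<in>B. norm x \<le> R" using bd unfolding bounded_iff by blast
  define N where "N = \<lceil>R / h\<rceil>"
  have "B \<subseteq> (\<lambda>f. \<chi> i. h * of_int (f i)) ` (\<Pi>\<^sub>E i\<in>(UNIV::8 set). {-N..N})"
  proof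
    fix b assume b: "b \<in> B"
    define f where "f i = (SOME k::int. b $ i = h * of_int k)" for i
    have f: "b $ i = h * of_int (f i)" for i
    proof -
      have "\<exists>k::int. b $ i = h * of_int k" using B b unfolding lattice_def by blast
      then show ?thesis unfolding f_def by (rule someI_ex)
    qed
    have "\<bar>f i\<bar> \<le> N" for i
    proof -
      have "\<bar>b $ i\<bar> \<le> R" using R b component_le_norm_cart[of b i] by force
      then have "h * \<bar>of_int (f i)\<bar> \<le> R" using f[of i] h by (simp add: abs_mult)
      then have "\<bar>of_int (f i)\<bar> \<le> R / h" using h by (simp add: field_simps)
      then have "real_of_int \<bar>f i\<bar> \<le> R / h" by simp
      then show ?thesis unfolding N_def by (metis ceiling_mono ceiling_of_int)
    qed
    then have "f \<in> (\<Pi>\<^sub>E i\<in>(UNIV::8 set). {-N..N})" by (force simp: abs_le_iff)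
    moreover have "b = (\<chi> i. h * of_int (f i))" using f by (simp add: vec_eq_iff)
    ultimately show "b \<in> (\<lambda>f. \<chi> i. h * of_int (f i)) ` (\<Pi>\<^sub>E i\<in>(UNIV::8 set). {-N..N})" by blast
  qed
  moreover have "finite ((\<lambda>f. \<chi> i. h * of_int (f i)) ` (\<Pi>\<^sub>E i\<in>(UNIV::8 set). {-N..N}))"
    by (intro finite_imageI finite_PiE) auto
  ultimately show ?thesis by (rule finite_subset)
qed

lemma lattice_add: "x \<in> lattice h \<Longrightarrow> z \<in> lattice h \<Longrightarrow> x + z \<in> lattice h"
  unfolding lattice_def
proof (clarsimp)
  fix i assume "\<forall>i. \<exists>k::int. x $ i = h * of_int k" "\<forall>i. \<exists>k::int. z $ i = h * of_int k"
  then obtain a b :: int where "x $ i = h * of_int a" "z $ i = h * of_int b" by blast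
  then show "\<exists>k::int. x $ i + z $ i = h * of_int k" by (intro exI[of _ "a + b"]) (simp add: algebra_simps)
qed

lemma lattice_uminus: "x \<in> lattice h \<Longrightarrow> - x \<in> lattice h"
  unfolding lattice_def
proof (clarsimp)
  fix i assume "\<forall>i. \<exists>k::int. x $ i = h * of_int k"
  then obtain a :: int where "x $ i = h * of_int a" by blast
  then show "\<exists>k::int. - x $ i = h * of_int k" by (intro exI[of _ "- a"]) simp
qed

lemma lattice_diff: "x \<in> lattice h \<Longrightarrow> z \<in> lattice h \<Longrightarrow> x - z \<in> lattice h"
  using lattice_add[of x h "- z"] lattice_uminus[of z h] by simp

lemma lattice_eb: "h *\<^sub>R eb l \<in> lattice h"
  unfolding lattice_def
  by (auto simp: eb_def axis_def intro: exI[of _ 1] exI[of _ 0])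

lemma lattice_int:
  assumes h: "h > 0" and z: "z \<in> lattice h"
  shows "\<forall>i. \<exists>k::int. ((1/h) *\<^sub>R z) $ i = of_int k"
proof
  fix i
  obtain k :: int where "z $ i = h * of_int k" using z unfolding lattice_def by blast
  then show "\<exists>k::int. ((1/h) *\<^sub>R z) $ i = of_int k" using h by (intro exI[of _ k]) simp
qed

lemma key_Eh:
  assumes h: "h > 0" and z: "z \<in> lattice h"
  shows "(\<Sum>l\<in>UNIV. omul (Eh h (z + h *\<^sub>R eb l) - Eh h (z - h *\<^sub>R eb l)) (omul (eb l) g))
         = (if z = 0 then 2 / h ^ 7 else 0) *\<^sub>R g"
proof -
  define k where "k = (1/h) *\<^sub>R z"
  have p: "(1/h) *\<^sub>R (z + h *\<^sub>R eb l) = k + eb l" for l using h by (simp add: k_def scaleR_add_right)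
  have m: "(1/h) *\<^sub>R (z - h *\<^sub>R eb l) = k - eb l" for l using h by (simp add: k_def scaleR_diff_right)
  have "(\<Sum>l\<in>UNIV. omul (Eh h (z + h *\<^sub>R eb l) - Eh h (z - h *\<^sub>R eb l)) (omul (eb l) g))
     = (1 / h ^ 7) *\<^sub>R (\<Sum>l\<in>UNIV. omul (E1 (k + eb l) - E1 (k - eb l)) (omul (eb l) g))"
    unfolding Eh_def p m by (simp add: scaleR_diff_right[symmetric] omul.scaleR_left scaleR_sum_right)
  also have "\<dots> = (1 / h ^ 7) *\<^sub>R ((if k = 0 then 2 else 0) *\<^sub>R g)"
    using key_E1[OF lattice_int[OF h z]] by (simp add: k_def)
  also have "k = 0 \<longleftrightarrow> z = 0" using h by (simp add: k_def)
  finally show ?thesis by simp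
qed


lemma alg_comb:
  fixes P Q :: "'a::real_vector" and h a b c :: real
  assumes "h \<noteq> 0"
  shows "(h^8/2) *\<^sub>R (((1/h) * (a - b)) *\<^sub>R P + ((1/h) * (c - a)) *\<^sub>R Q) + (h^8/(2*h)) *\<^sub>R (b *\<^sub>R P - c *\<^sub>R Q) = (h^8/(2*h)) *\<^sub>R (a *\<^sub>R (P - Q))"
proof -
  have "(h^8/2) *\<^sub>R (((1/h) * (a - b)) *\<^sub>R P + ((1/h) * (c - a)) *\<^sub>R Q) + (h^8/(2*h)) *\<^sub>R (b *\<^sub>R P - c *\<^sub>R Q)
    = ((h^8/2) * ((1/h) * (a - b)) + (h^8/(2*h)) * b) *\<^sub>R P + ((h^8/2) * ((1/h) * (c - a)) - (h^8/(2*h)) * c) *\<^sub>R Q"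
    by (simp add: scaleR_add_right scaleR_diff_right scaleR_add_left scaleR_diff_left)
  also have "(h^8/2) * ((1/h) * (a - b)) + (h^8/(2*h)) * b = (h^8/(2*h)) * a" using assms by (simp add: field_simps)
  also have "(h^8/2) * ((1/h) * (c - a)) - (h^8/(2*h)) * c = - ((h^8/(2*h)) * a)" using assms by (simp add: field_simps)
  finally show ?thesis by (simp add: scaleR_diff_right)
qed

lemma reindex_shift:
  fixes \<phi> :: "real^8 \<Rightarrow> 'a::real_vector"
  assumes T: "finite T" and sub: "(\<lambda>b. b + v) ` B \<subseteq> T"
  shows "(\<Sum>x\<in>B. \<phi> (x + v)) = (\<Sum>w\<in>T. indicator B (w - v) *\<^sub>R \<phi> w)"
proof -
  have "(\<Sum>w\<in>T. indicator B (w - v) *\<^sub>R \<phi> w) = (\<Sum>w\<in>T. if w \<in> (\<lambda>b. b + v) ` B then \<phi> w else 0)"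
  proof (rule sum.cong[OF refl])
    fix w
    have "w - v \<in> B \<longleftrightarrow> w \<in> (\<lambda>b. b + v) ` B"
      by (auto simp: image_iff intro: bexI[of _ "w - v"])
    then show "indicator B (w - v) *\<^sub>R \<phi> w = (if w \<in> (\<lambda>b. b + v) ` B then \<phi> w else 0)"
      by (simp add: indicator_def)
  qed
  also have "\<dots> = (\<Sum>w\<in>T \<inter> (\<lambda>b. b + v) ` B. \<phi> w)"
    using T by (simp add: sum.inter_restrict)
  also have "T \<inter> (\<lambda>b. b + v) ` B = (\<lambda>b. b + v) ` B" using sub by blast
  also have "(\<Sum>w\<in>(\<lambda>b. b + v) ` B. \<phi> w) = (\<Sum>x\<in>B. \<phi> (x + v))"
    by (subst sum.reindex) (auto simp: inj_on_def)
  finally show ?thesis ..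
qed

lemma nbhd_lattice: "x \<in> lattice h \<Longrightarrow> nbhd h x \<subseteq> lattice h"
  unfolding nbhd_def using lattice_add lattice_diff lattice_eb by blast

lemma off_bdry:
  assumes x: "x \<in> lattice h" and nb: "x \<notin> bdry h B"
  shows "dminus h l (indicator B :: real^8 \<Rightarrow> real) x = 0" "dplus h l (indicator B :: real^8 \<Rightarrow> real) x = 0"
proof -
  have mem: "x \<in> nbhd h x" "x + h *\<^sub>R eb l \<in> nbhd h x" "x - h *\<^sub>R eb l \<in> nbhd h x"
    unfolding nbhd_def by auto
  from nb x have "nbhd h x \<inter> B = {} \<or> nbhd h x \<inter> (lattice h - B) = {}" unfolding bdry_def by auto
  then have "(x \<notin> B \<and> x + h *\<^sub>R eb l \<notin> B \<and> x - h *\<^sub>R eb l \<notin> B) \<or> (x \<in> B \<and> x + h *\<^sub>R eb l \<in> B \<and> x - h *\<^sub>R eb l \<in> B)"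
    using mem nbhd_lattice[OF x] by blast
  then show "dminus h l (indicator B :: real^8 \<Rightarrow> real) x = 0" "dplus h l (indicator B :: real^8 \<Rightarrow> real) x = 0"
    unfolding dminus_def dplus_def by (auto simp: indicator_def)
qed

lemma surf_term:
  "sdens h B x *\<^sub>R Kstar h B x y f =
     (h^8/2) *\<^sub>R (\<Sum>l\<in>UNIV. omul (dminus h l (indicator B :: real^8 \<Rightarrow> real) x *\<^sub>R Eh h (h *\<^sub>R eb l - x + y)
                      + dplus h l (indicator B :: real^8 \<Rightarrow> real) x *\<^sub>R Eh h (- (h *\<^sub>R eb l) - x + y)) (omul (eb l) (f x)))"
proof (cases "Sig h B x = 0")
  case True
  then have "\<forall>l\<in>UNIV. (dplus h l (indicator B :: real^8 \<Rightarrow> real) x)\<^sup>2 + (dminus h l (indicator B :: real^8 \<Rightarrow> real) x)\<^sup>2 = 0"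
    unfolding Sig_def by (subst sum_nonneg_eq_0_iff[symmetric]) auto
  then have "dplus h l (indicator B :: real^8 \<Rightarrow> real) x = 0 \<and> dminus h l (indicator B :: real^8 \<Rightarrow> real) x = 0" for l
    by (metis UNIV_I add_nonneg_eq_0_iff zero_eq_power2 zero_le_power2)
  then show ?thesis using True by (simp add: sdens_def omul.zero_left)
next
  case False
  define s where "s = sqrt (Sig h B x)"
  have s: "s \<noteq> 0" using False unfolding s_def Sig_def
    by simp
  have "Kstar h B x y f = (1 / s) *\<^sub>R (\<Sum>l\<in>UNIV. omul (dminus h l (indicator B :: real^8 \<Rightarrow> real) x *\<^sub>R Eh h (h *\<^sub>R eb l - x + y)
                      + dplus h l (indicator B :: real^8 \<Rightarrow> real) x *\<^sub>R Eh h (- (h *\<^sub>R eb l) - x + y)) (omul (eb l) (f x)))"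
  proof -
    have "nminus h B l x *\<^sub>R Eh h (h *\<^sub>R eb l - x + y) + nplus h B l x *\<^sub>R Eh h (- (h *\<^sub>R eb l) - x + y)
        = (- 2 / s) *\<^sub>R (dminus h l (indicator B :: real^8 \<Rightarrow> real) x *\<^sub>R Eh h (h *\<^sub>R eb l - x + y)
                      + dplus h l (indicator B :: real^8 \<Rightarrow> real) x *\<^sub>R Eh h (- (h *\<^sub>R eb l) - x + y))" for l
      unfolding nminus_def nplus_def s_def[symmetric] by (simp add: scaleR_add_right)
    then have "Kstar h B x y f = - (1/2) *\<^sub>R (\<Sum>l\<in>UNIV. (- 2 / s) *\<^sub>R omul (dminus h l (indicator B :: real^8 \<Rightarrow> real) x *\<^sub>R Eh h (h *\<^sub>R eb l - x + y)
                      + dplus h l (indicator B :: real^8 \<Rightarrow> real) x *\<^sub>R Eh h (- (h *\<^sub>R eb l) - x + y)) (omul (eb l) (f x)))"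
      unfolding Kstar_def by (simp only: omul.scaleR_left)
    also have "\<dots> = (- (1/2) * (- 2 / s)) *\<^sub>R (\<Sum>l\<in>UNIV. omul (dminus h l (indicator B :: real^8 \<Rightarrow> real) x *\<^sub>R Eh h (h *\<^sub>R eb l - x + y)
                      + dplus h l (indicator B :: real^8 \<Rightarrow> real) x *\<^sub>R Eh h (- (h *\<^sub>R eb l) - x + y)) (omul (eb l) (f x)))"
      by (simp only: scaleR_sum_right[symmetric] scaleR_scaleR)
    finally show ?thesis by simp
  qed
  then show ?thesis unfolding sdens_def s_def[symmetric] using s by simp
qed

lemma dcent_eq: "h \<noteq> 0 \<Longrightarrow> dcent h l f x = (1 / (2 * h)) *\<^sub>R (f (x + h *\<^sub>R eb l) - f (x - h *\<^sub>R eb l))"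
  unfolding dcent_def dplus_def dminus_def
  by (simp add: scaleR_add_right[symmetric] scaleR_diff_right)


theorem mainTheorem7:
  fixes h :: real and B :: "(real ^ 8) set" and f :: "real ^ 8 \<Rightarrow> oct" and y :: "real ^ 8"
  assumes "h > 0" and "B \<subseteq> lattice h" and "bounded B" and "y \<in> lattice h"
  shows "indicator B y *\<^sub>R f y =
           surf_int h B (\<lambda>x. Kstar h B x y f) + vol_int h B (\<lambda>x. omul (Eh h (y - x)) (Dh h f x))"
proof -
  note h = assms(1) and Blat = assms(2) and bd = assms(3) and ylat = assms(4)
  define X where "X = (indicator B :: real^8 \<Rightarrow> real)"
  define hv where "hv l = h *\<^sub>R eb l" for l
  define T where "T = B \<union> (\<Union>l. (\<lambda>b. b + hv l) ` B) \<union> (\<Union>l. (\<lambda>b. b - hv l) ` B)"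
  have finB: "finite B" by (rule lattice_finite[OF h Blat bd])
  have finT: "finite T" unfolding T_def using finB by auto
  have Tlat: "T \<subseteq> lattice h"
    unfolding T_def hv_def using Blat lattice_add lattice_diff lattice_eb by blast
  have bdT: "bdry h B \<subseteq> T"
  proof
    fix x assume "x \<in> bdry h B"
    then obtain n where n: "n \<in> nbhd h x" "n \<in> B" unfolding bdry_def by blast
    then have "n = x \<or> (\<exists>l. n = x + hv l) \<or> (\<exists>l. n = x - hv l)" unfolding nbhd_def hv_def by auto
    then show "x \<in> T"
    proof (elim disjE exE)
      assume "n = x" then show ?thesis using n unfolding T_def by blast
    next
      fix l assume "n = x + hv l"
      then have "x = n - hv l" by simp
      then show ?thesis using n unfolding T_def by blast
    next
      fix l assume "n = x - hv l"
      then have "x = n + hv l" by simp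
      then show ?thesis using n unfolding T_def by blast
    qed
  qed
  have subp: "(\<lambda>b. b + hv l) ` B \<subseteq> T" for l unfolding T_def by blast
  have subm: "(\<lambda>b. b + (- hv l)) ` B \<subseteq> T" for l unfolding T_def by auto
  define P where "P l w = omul (Eh h (hv l - w + y)) (omul (eb l) (f w))" for l w
  define Q where "Q l w = omul (Eh h (- hv l - w + y)) (omul (eb l) (f w))" for l w
  define dm where "dm l w = dminus h l X w" for l w
  define dp where "dp l w = dplus h l X w" for l w
  have surf: "surf_int h B (\<lambda>x. Kstar h B x y f) = (\<Sum>w\<in>T. \<Sum>l\<in>UNIV. (h^8/2) *\<^sub>R (dm l w *\<^sub>R P l w + dp l w *\<^sub>R Q l w))"
  proof -
    have "surf_int h B (\<lambda>x. Kstar h B x y f) = (\<Sum>w\<in>bdry h B. \<Sum>l\<in>UNIV. (h^8/2) *\<^sub>R (dm l w *\<^sub>R P l w + dp l w *\<^sub>R Q l w))"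
      unfolding surf_int_def surf_term
      by (simp add: P_def Q_def dm_def dp_def hv_def X_def omul.add_left omul.scaleR_left scaleR_sum_right)
    also have "\<dots> = (\<Sum>w\<in>T. \<Sum>l\<in>UNIV. (h^8/2) *\<^sub>R (dm l w *\<^sub>R P l w + dp l w *\<^sub>R Q l w))"
    proof (rule sum.mono_neutral_left[OF finT bdT], rule ballI)
      fix w assume w: "w \<in> T - bdry h B"
      then have "w \<in> lattice h" using Tlat by blast
      then have "dm l w = 0" "dp l w = 0" for l using w off_bdry unfolding dm_def dp_def X_def by auto
      then show "(\<Sum>l\<in>UNIV. (h^8/2) *\<^sub>R (dm l w *\<^sub>R P l w + dp l w *\<^sub>R Q l w)) = 0" by simp
    qed
    finally show ?thesis .
  qed
  have vol: "vol_int h B (\<lambda>x. omul (Eh h (y - x)) (Dh h f x)) =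
     (h^8/(2*h)) *\<^sub>R (\<Sum>l\<in>UNIV. (\<Sum>w\<in>T. X (w - hv l) *\<^sub>R P l w) - (\<Sum>w\<in>T. X (w - (- hv l)) *\<^sub>R Q l w))"
  proof -
    have pt: "omul (Eh h (y - x)) (Dh h f x) = (1/(2*h)) *\<^sub>R (\<Sum>l\<in>UNIV. P l (x + hv l) - Q l (x + (- hv l)))" for x
    proof -
      have e1: "hv l - (x + hv l) + y = y - x" for l by (simp add: algebra_simps)
      have e2: "- hv l - (x + - hv l) + y = y - x" for l by (simp add: algebra_simps)
      show ?thesis
        unfolding Dh_def dcent_eq[OF less_imp_neq[OF h, symmetric]] P_def Q_def e1 e2
        by (simp add: hv_def omul.sum_right omul.scaleR_right omul.diff_right scaleR_sum_right)
    qed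
    have "vol_int h B (\<lambda>x. omul (Eh h (y - x)) (Dh h f x)) = (\<Sum>x\<in>B. (h^8/(2*h)) *\<^sub>R (\<Sum>l\<in>UNIV. P l (x + hv l) - Q l (x + (- hv l))))"
      unfolding vol_int_def pt by (simp add: scaleR_scaleR)
    also have "\<dots> = (h^8/(2*h)) *\<^sub>R (\<Sum>l\<in>UNIV. (\<Sum>x\<in>B. P l (x + hv l)) - (\<Sum>x\<in>B. Q l (x + (- hv l))))"
      by (simp add: scaleR_sum_right[symmetric] sum_subtractf sum.swap[of _ B])
    also have "\<dots> = (h^8/(2*h)) *\<^sub>R (\<Sum>l\<in>UNIV. (\<Sum>w\<in>T. X (w - hv l) *\<^sub>R P l w) - (\<Sum>w\<in>T. X (w - (- hv l)) *\<^sub>R Q l w))"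
      unfolding reindex_shift[OF finT subp] reindex_shift[OF finT subm] X_def ..
    finally show ?thesis .
  qed
  have comb: "(h^8/2) *\<^sub>R (dm l w *\<^sub>R P l w + dp l w *\<^sub>R Q l w) + (h^8/(2*h)) *\<^sub>R (X (w - hv l) *\<^sub>R P l w - X (w - (- hv l)) *\<^sub>R Q l w)
      = (h^8/(2*h)) *\<^sub>R (X w *\<^sub>R (P l w - Q l w))" for l w
  proof -
    have "dm l w = (1/h) * (X w - X (w - hv l))" unfolding dm_def dminus_def hv_def by simp
    moreover have "dp l w = (1/h) * (X (w - (- hv l)) - X w)" unfolding dp_def dplus_def hv_def by simp
    ultimately show ?thesis using alg_comb[where h=h and a="X w" and b="X (w - hv l)" and c="X (w - (- hv l))" and P="P l w" and Q="Q l w"] h by simp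
  qed
  have keyw: "(\<Sum>l\<in>UNIV. (h^8/(2*h)) *\<^sub>R (X w *\<^sub>R (P l w - Q l w))) = (if w = y then X w *\<^sub>R f w else 0)" if w: "w \<in> T" for w
  proof -
    have z: "y - w \<in> lattice h" using w Tlat ylat lattice_diff by blast
    have e1: "hv l - w + y = (y - w) + h *\<^sub>R eb l" for l unfolding hv_def by (simp add: algebra_simps)
    have e2: "- hv l - w + y = (y - w) - h *\<^sub>R eb l" for l unfolding hv_def by (simp add: algebra_simps)
    have "(\<Sum>l\<in>UNIV. (h^8/(2*h)) *\<^sub>R (X w *\<^sub>R (P l w - Q l w)))
        = ((h^8/(2*h)) * X w) *\<^sub>R (\<Sum>l\<in>UNIV. omul (Eh h ((y - w) + h *\<^sub>R eb l) - Eh h ((y - w) - h *\<^sub>R eb l)) (omul (eb l) (f w)))"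
      unfolding P_def Q_def e1 e2 by (simp add: scaleR_sum_right omul.diff_left)
    also have "\<dots> = ((h^8/(2*h)) * X w) *\<^sub>R ((if y - w = 0 then 2 / h ^ 7 else 0) *\<^sub>R f w)"
      by (simp only: key_Eh[OF h z])
    also have "\<dots> = (if w = y then X w *\<^sub>R f w else 0)"
      using h by (auto simp: power_eq_if)
    finally show ?thesis .
  qed
  have "surf_int h B (\<lambda>x. Kstar h B x y f) + vol_int h B (\<lambda>x. omul (Eh h (y - x)) (Dh h f x))
      = (\<Sum>w\<in>T. \<Sum>l\<in>UNIV. (h^8/2) *\<^sub>R (dm l w *\<^sub>R P l w + dp l w *\<^sub>R Q l w) + (h^8/(2*h)) *\<^sub>R (X (w - hv l) *\<^sub>R P l w - X (w - (- hv l)) *\<^sub>R Q l w))"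
    unfolding surf vol
    by (simp add: sum.distrib scaleR_sum_right sum_subtractf[symmetric] scaleR_diff_right sum.swap[of _ T])
  also have "\<dots> = (\<Sum>w\<in>T. if w = y then X w *\<^sub>R f w else 0)"
    unfolding comb using keyw by (intro sum.cong) auto
  also have "\<dots> = X y *\<^sub>R f y"
    using finT T_def by (auto simp: X_def)
  finally show ?thesis unfolding X_def by simp
qed


end
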